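(* Consider Algorithm Q-LDP under Assumptions A1–A4 (see context), and fix an agent $i\in[m]$ and a horizon $T\in\mathbb{N}^+$. (1) Define $\varrho^i_{t,\psi}=2d_l\sum_{p=0}^{t-1}(1-|C_{ii}|)^p\lambda_{t-1-p}$ and $\varrho^i_{t,\theta}=\sum_{p=0}^{t-1}(1-|R_{ii}|)^{t-p-1}\big(C_zP_z^p+\frac{1}{|u_i|}\big)(\varrho^i_{p+1,\psi}+\varrho^i_{p,\psi})$. If $d_0^i\ge\sum_{t=0}^{T-1}(\varrho^i_{t,\psi}+\varrho^i_{t,\theta})(t+1)^{\varsigma^i}$, then the mechanism $\mathcal{M}^i_T$ is $(0,\delta^i)$-LDP with $\delta^i=\sum_{t=0}^{T-1}(\varrho^i_{t,\psi}+\varrho^i_{t,\theta})/d_t^i\le1$. (2) There exist constants $C_0,C_3>0$, not depending on $T$, such that if $d_0^i\ge\sum_{t=0}^{\infty}\frac{C_3(C_z+C_0)}{(t+1)^{1+\nu-\varsigma^i}}$ (a finite quantity since $\varsigma^i<\nu$), then for every horizon $T$ (hence over infinitely many iterations) the mechanism $\mathcal{M}^i_T$ is $(0,\delta^i)$-LDP with $\delta^i=\sum_{t=0}^{T-1}\frac{C_3(C_z+C_0)}{d_0^i(t+1)^{1+\nu-\varsigma^i}}\le1$.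
   Context: Setting. There are $m$ agents. Agent $i$ has a loss $l_i(\theta,x)$, $\theta\in\mathbb{R}^d$, and receives at each time $k=0,1,2,\dots$ a data point $x_k^i\sim\Phi^i$. Let $f_i(\theta)=\mathbb{E}_{x\sim\Phi^i}[l_i(\theta,x)]$ and $F=\frac1m\sum_i f_i$. Assumption A1: $F$ convex with bounded level sets and a minimizer. Assumption A2: data i.i.d. over time; $\mathbb{E}[\nabla l_i(\theta,x_k^i)]=\nabla f_i(\theta)$; $\mathbb{E}\|\nabla l_i(\theta,x_k^i)-\nabla f_i(\theta)\|^2\le\kappa^2$; $\nabla l_i(\cdot,x)$ is $L$-Lipschitz. Assumption A3: $\|\nabla l_i(\theta,x_k^i)\|_1\le d_l$ for all $\theta,i,k$. Assumption A4: $R,C\in\mathbb{R}^{m\times m}$ have nonnegative off-diagonal entries, $R_{ii}=-\sum_{j\ne i}R_{ij}<0$, $C_{ii}=-\sum_{j\ne i}C_{ji}<0$, $1+R_{ii}>0$, $1+C_{ii}>0$; the graph $\mathcal{G}_R$ (edge $j\to i$ iff $R_{ij}>0$) and the graph $\mathcal{G}_{C^T}$ (reverse of the graph with edge $j\to i$ iff $C_{ij}>0$) each contain a spanning tree with a common root. $\mathbb{N}^{in}_{R,i}=\{j\ne i:R_{ij}>0\}$, $\mathbb{N}^{in}_{C,i}=\{j\ne i:C_{ij}>0\}$. $u$ denotes the unique nonnegative vector with $u^T(I+R)=u^T$, $u^T\mathbf 1=m$. Under A4 there exist constants $C_z>0$, $P_z\in(0,1)$ with $\big|\frac{1}{m[z_t^i]_i}-\frac1{u_i}\big|\le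 C_zP_z^t$ for all $i,t$ (with $z_t^i$ from the algorithm below); these are the $C_z,P_z$ used in the claim. Dynamic stochastic quantizer with stepsize $d>0$: for $y\in\mathbb{R}$ write $y=z+nd$ with $n\in\mathbb{Z}$, $z\in(0,d]$; $Q(y)=nd$ w.p. $1-z/d$, $Q(y)=(n+1)d$ w.p. $z/d$; vectors quantized componentwise with fresh independent randomness. Algorithm Q-LDP: $\lambda_t=\lambda_0/(t+1)^\nu$, $d_t^i=d_0^i/(t+1)^{\varsigma^i}$, $\lambda_0,d_0^i>0$, $\nu,\varsigma^i\in(\frac12,1)$, $\max_i\varsigma^i<\nu$; $\theta_0^i,\psi_0^i$ arbitrary, $z_0^i=e_i$. With $g_t^i=\frac1{t+1}\sum_{k=0}^t\nabla l_i(\theta_t^i,x_k^i)$ and quantization of agent $j$'s values at stepsize $d_t^j$: $\psi_{t+1}^i=(1+C_{ii})\psi_t^i+\sum_{j\in\mathbb{N}^{in}_{C,i}}C_{ij}Q(\psi_t^j)+\lambda_tg_t^i$, $\theta_{t+1}^i=(1+R_{ii})\theta_t^i+\sum_{j\in\mathbb{N}^{in}_{R,i}}R_{ij}Q(\theta_t^j)-\frac{\psi_{t+1}^i-\psi_t^i}{m[z_t^i]_i}$, $z_{t+1}^i=z_t^i+\sum_{j\in\mathbb{N}^{in}_{R,i}}R_{ij}(z_t^j-z_t^i)$. Local differential privacy. Local datasets $\mathcal{D}^i=\{x_0^i,\dots,x_{T-1}^i\}$ and $\mathcal{D}'^i=\{x_0'^i,\dots,x_{T-1}'^i\}$ are adjacent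 if they differ in exactly one time index $k$. The mechanism $\mathcal{M}^i_T(\mathcal{D}^i)$ is the sequence of quantized messages $(Q(\theta_t^i),Q(\psi_t^i))_{t=0}^{T-1}$ released by agent $i$ when run on its local data $\mathcal{D}^i$, with all messages received from other agents held identical between the two runs. A mechanism $\mathcal{M}$ is $(0,\delta)$-LDP if for all adjacent $\mathcal{D}^i,\mathcal{D}'^i$ and every Borel set $\mathcal{S}$ of outputs, $\mathbb{P}[\mathcal{M}(\mathcal{D}^i)\in\mathcal{S}]\le\mathbb{P}[\mathcal{M}(\mathcal{D}'^i)\in\mathcal{S}]+\delta$. *)

theory Defs
  imports "HOL-Analysis.Analysis" "HOL-Probability.Probability"
begin

definition l1norm :: "real^'n \<Rightarrow> real" where
  "l1norm v = (\<Sum>k\<in>UNIV. \<bar>v $ k\<bar>)"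

text \<open>Dynamic stochastic quantizer with stepsize d: write y = z + n d with n integer,
  z in (0,d]; i.e. n = ceiling(y/d) - 1.  Q(y) = n d w.p. 1 - z/d and (n+1) d w.p. z/d.\<close>
definition quant :: "real \<Rightarrow> real \<Rightarrow> real pmf" where
  "quant d y = (let n = \<lceil>y / d\<rceil> - 1; z = y - of_int n * d in
     map_pmf (\<lambda>b. if b then (of_int n + 1) * d else of_int n * d) (bernoulli_pmf (z / d)))"

definition quant_vec :: "real \<Rightarrow> real^'d::finite \<Rightarrow> (real^'d) pmf" where
  "quant_vec d v = map_pmf vec_lambda (Pi_pmf UNIV 0 (\<lambda>k. quant d (v $ k)))"

text \<open>E a b means: directed edge a -> b.  A spanning (out-)tree rooted at r is given
  by a parent map: every non-root vertex v has a tree edge par v -> v, and following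
  parents from any vertex reaches r.\<close>
definition has_spanning_tree_rooted :: "('v::finite \<Rightarrow> 'v \<Rightarrow> bool) \<Rightarrow> 'v \<Rightarrow> bool" where
  "has_spanning_tree_rooted E r \<longleftrightarrow>
     (\<exists>par. (\<forall>v. v \<noteq> r \<longrightarrow> E (par v) v) \<and> (\<forall>v. \<exists>n. (par ^^ n) v = r))"

definition edge_R :: "real^'m^'m \<Rightarrow> 'm \<Rightarrow> 'm \<Rightarrow> bool" where
  "edge_R R j i \<longleftrightarrow> R $ i $ j > 0"

text \<open>Graph G_{C^T}: reverse of the graph with edge j -> i iff C_ij > 0,
  i.e. edge i -> j iff C_ij > 0.\<close>
definition edge_CT :: "real^'m^'m \<Rightarrow> 'm \<Rightarrow> 'm \<Rightarrow> bool" where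
  "edge_CT C i j \<longleftrightarrow> C $ i $ j > 0"

definition assm_A4 :: "real^'m::finite^'m \<Rightarrow> real^'m^'m \<Rightarrow> bool" where
  "assm_A4 R C \<longleftrightarrow>
     (\<forall>i j. i \<noteq> j \<longrightarrow> R $ i $ j \<ge> 0 \<and> C $ i $ j \<ge> 0) \<and>
     (\<forall>i. R $ i $ i = - (\<Sum>j\<in>UNIV - {i}. R $ i $ j) \<and> R $ i $ i < 0) \<and>
     (\<forall>i. C $ i $ i = - (\<Sum>j\<in>UNIV - {i}. C $ j $ i) \<and> C $ i $ i < 0) \<and>
     (\<forall>i. 1 + R $ i $ i > 0 \<and> 1 + C $ i $ i > 0) \<and>
     (\<exists>r. has_spanning_tree_rooted (edge_R R) r \<and> has_spanning_tree_rooted (edge_CT C) r)"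

definition N_in :: "real^'m^'m \<Rightarrow> 'm \<Rightarrow> 'm set" where
  "N_in A i = {j. j \<noteq> i \<and> A $ i $ j > 0}"

definition u_vec :: "real^'m::finite^'m \<Rightarrow> real^'m" where
  "u_vec R = (THE u. (\<forall>k. u $ k \<ge> 0) \<and> u v* (mat 1 + R) = u \<and>
                     (\<Sum>k\<in>UNIV. u $ k) = real CARD('m))"

primrec zseq :: "real^'m::finite^'m \<Rightarrow> nat \<Rightarrow> 'm \<Rightarrow> real^'m" where
  "zseq R 0 i = axis i 1"
| "zseq R (Suc t) i = zseq R t i + (\<Sum>j\<in>N_in R i. R $ i $ j *\<^sub>R (zseq R t j - zseq R t i))"

text \<open>Trajectory (theta_t^i, psi_t^i) of agent i, run on local data D (D k = x_k^i),
  step sizes lam t, with the messages mth j t = Q(theta_t^j), mps j t = Q(psi_t^j)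
  received from other agents held fixed.  Agent i's own state uses its unquantized values.\<close>
primrec qldp_traj ::
  "real^'m::finite^'m \<Rightarrow> real^'m^'m \<Rightarrow> ('m \<Rightarrow> real^'d \<Rightarrow> 'x \<Rightarrow> real^'d) \<Rightarrow> 'm \<Rightarrow>
   (nat \<Rightarrow> real) \<Rightarrow> real^'d \<Rightarrow> real^'d \<Rightarrow> ('m \<Rightarrow> nat \<Rightarrow> real^'d) \<Rightarrow> ('m \<Rightarrow> nat \<Rightarrow> real^'d) \<Rightarrow>
   (nat \<Rightarrow> 'x) \<Rightarrow> nat \<Rightarrow> (real^'d) \<times> (real^'d)" where
  "qldp_traj R C gl i lam th0 ps0 mth mps D 0 = (th0, ps0)"
| "qldp_traj R C gl i lam th0 ps0 mth mps D (Suc t) =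
    (let (th, ps) = qldp_traj R C gl i lam th0 ps0 mth mps D t;
         g = (1 / real (t + 1)) *\<^sub>R (\<Sum>k\<le>t. gl i th (D k));
         ps' = (1 + C $ i $ i) *\<^sub>R ps + (\<Sum>j\<in>N_in C i. C $ i $ j *\<^sub>R mps j t) + lam t *\<^sub>R g;
         th' = (1 + R $ i $ i) *\<^sub>R th + (\<Sum>j\<in>N_in R i. R $ i $ j *\<^sub>R mth j t)
               - (1 / (real CARD('m) * (zseq R t i $ i))) *\<^sub>R (ps' - ps)
     in (th', ps'))"

text \<open>The mechanism M_T^i: the (independently quantized) released messages
  (Q(theta_t^i), Q(psi_t^i)) for t < T, quantized at stepsize dstep t = d_t^i.
  Output is a sequence indexed by nat, with the dummy value (0,0) for t >= T.\<close>
definition qldp_mech ::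
  "real^'m::finite^'m \<Rightarrow> real^'m^'m \<Rightarrow> ('m \<Rightarrow> real^'d::finite \<Rightarrow> 'x \<Rightarrow> real^'d) \<Rightarrow> 'm \<Rightarrow>
   (nat \<Rightarrow> real) \<Rightarrow> (nat \<Rightarrow> real) \<Rightarrow> nat \<Rightarrow> real^'d \<Rightarrow> real^'d \<Rightarrow>
   ('m \<Rightarrow> nat \<Rightarrow> real^'d) \<Rightarrow> ('m \<Rightarrow> nat \<Rightarrow> real^'d) \<Rightarrow>
   (nat \<Rightarrow> 'x) \<Rightarrow> (nat \<Rightarrow> (real^'d) \<times> (real^'d)) pmf" where
  "qldp_mech R C gl i lam dstep T th0 ps0 mth mps D =
     Pi_pmf {..<T} (0, 0)
       (\<lambda>t. let s = qldp_traj R C gl i lam th0 ps0 mth mps D t in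
            pair_pmf (quant_vec (dstep t) (fst s)) (quant_vec (dstep t) (snd s)))"

definition adjacent_data :: "nat \<Rightarrow> (nat \<Rightarrow> 'x) \<Rightarrow> (nat \<Rightarrow> 'x) \<Rightarrow> bool" where
  "adjacent_data T D D' \<longleftrightarrow> (\<exists>k<T. D k \<noteq> D' k \<and> (\<forall>j<T. j \<noteq> k \<longrightarrow> D j = D' j))"

definition zero_delta_LDP :: "('a \<Rightarrow> 'b pmf) \<Rightarrow> ('a \<Rightarrow> 'a \<Rightarrow> bool) \<Rightarrow> real \<Rightarrow> bool" where
  "zero_delta_LDP M adj \<delta> \<longleftrightarrow>
     (\<forall>D D'. adj D D' \<longrightarrow>
        (\<forall>S. measure_pmf.prob (M D) S \<le> measure_pmf.prob (M D') S + \<delta>))"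

definition qldp_is_LDP ::
  "real^'m::finite^'m \<Rightarrow> real^'m^'m \<Rightarrow> ('m \<Rightarrow> real^'d::finite \<Rightarrow> 'x \<Rightarrow> real^'d) \<Rightarrow> 'm \<Rightarrow>
   (nat \<Rightarrow> real) \<Rightarrow> (nat \<Rightarrow> real) \<Rightarrow> nat \<Rightarrow> real \<Rightarrow> bool" where
  "qldp_is_LDP R C gl i lam dstep T \<delta> \<longleftrightarrow>
     (\<forall>th0 ps0 mth mps.
        zero_delta_LDP (qldp_mech R C gl i lam dstep T th0 ps0 mth mps) (adjacent_data T) \<delta>)"

definition rho_psi :: "real \<Rightarrow> real \<Rightarrow> (nat \<Rightarrow> real) \<Rightarrow> nat \<Rightarrow> real" where
  "rho_psi dl Cii lam t = 2 * dl * (\<Sum>p<t. (1 - \<bar>Cii\<bar>) ^ p * lam (t - 1 - p))"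

definition rho_theta ::
  "real \<Rightarrow> real \<Rightarrow> real \<Rightarrow> (nat \<Rightarrow> real) \<Rightarrow> real \<Rightarrow> real \<Rightarrow> real \<Rightarrow> nat \<Rightarrow> real" where
  "rho_theta dl Cii Rii lam Cz Pz ui t =
     (\<Sum>p<t. (1 - \<bar>Rii\<bar>) ^ (t - p - 1) * (Cz * Pz ^ p + 1 / \<bar>ui\<bar>)
             * (rho_psi dl Cii lam (p + 1) + rho_psi dl Cii lam p))"

definition floss :: "('m \<Rightarrow> 'p \<Rightarrow> 'x \<Rightarrow> real) \<Rightarrow> ('m \<Rightarrow> 'x measure) \<Rightarrow> 'm \<Rightarrow> 'p \<Rightarrow> real" where
  "floss l \<Phi> j \<theta> = (\<integral>x. l j \<theta> x \<partial>\<Phi> j)"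

definition Ftot :: "('m::finite \<Rightarrow> 'p \<Rightarrow> 'x \<Rightarrow> real) \<Rightarrow> ('m \<Rightarrow> 'x measure) \<Rightarrow> 'p \<Rightarrow> real" where
  "Ftot l \<Phi> \<theta> = (1 / real CARD('m)) * (\<Sum>j\<in>UNIV. floss l \<Phi> j \<theta>)"

definition alg_params :: "real \<Rightarrow> real \<Rightarrow> ('m \<Rightarrow> real) \<Rightarrow> ('m \<Rightarrow> real) \<Rightarrow> bool" where
  "alg_params lam0 \<nu> d0 vs \<longleftrightarrow> lam0 > 0 \<and> 1/2 < \<nu> \<and> \<nu> < 1 \<and>
     (\<forall>j. d0 j > 0 \<and> 1/2 < vs j \<and> vs j < 1 \<and> vs j < \<nu>)"

end

theory Submission
  imports Defs
begin


definition tvb :: "'a pmf \<Rightarrow> 'a pmf \<Rightarrow> real \<Rightarrow> bool" where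
  "tvb p q e \<longleftrightarrow> (\<forall>S. measure_pmf.prob p S \<le> measure_pmf.prob q S + e)"

lemma tvb_mono: "tvb p q e \<Longrightarrow> e \<le> e' \<Longrightarrow> tvb p q e'"
  unfolding tvb_def by (meson add_left_mono order_trans)

lemma tvb_trans: "tvb p q e1 \<Longrightarrow> tvb q r e2 \<Longrightarrow> tvb p r (e1 + e2)"
  unfolding tvb_def by (smt (verit))

lemma tvb_refl: "0 \<le> e \<Longrightarrow> tvb p p e"
  unfolding tvb_def by simp

lemma tvb_map: "tvb p q e \<Longrightarrow> tvb (map_pmf f p) (map_pmf f q) e"
  unfolding tvb_def by simp

lemma tvb_bind:
  assumes "0 \<le> e" "\<And>x. x \<in> set_pmf p \<Longrightarrow> tvb (f x) (g x) e"
  shows "tvb (bind_pmf p f) (bind_pmf p g) e"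
  unfolding tvb_def
proof
  fix S
  have pt: "emeasure (f x) S \<le> emeasure (g x) S + ennreal e" if "x \<in> set_pmf p" for x
  proof -
    have "measure_pmf.prob (f x) S \<le> measure_pmf.prob (g x) S + e"
      using assms(2)[OF that] unfolding tvb_def by blast
    then have "ennreal (measure_pmf.prob (f x) S) \<le> ennreal (measure_pmf.prob (g x) S) + ennreal e"
      using assms(1) by (simp add: ennreal_plus[symmetric] del: ennreal_plus)
    then show ?thesis by (simp add: measure_pmf.emeasure_eq_measure)
  qed
  have "emeasure (bind_pmf p f) S = (\<integral>\<^sup>+x. emeasure (f x) S \<partial>p)" by simp
  also have "\<dots> \<le> (\<integral>\<^sup>+x. emeasure (g x) S + ennreal e \<partial>p)"
    using pt by (intro nn_integral_mono_AE) (simp add: AE_measure_pmf_iff)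
  also have "\<dots> = (\<integral>\<^sup>+x. emeasure (g x) S \<partial>p) + ennreal e"
    by (subst nn_integral_add) (auto simp: measure_pmf.emeasure_space_1)
  also have "\<dots> = emeasure (bind_pmf p g) S + ennreal e" by simp
  finally have "ennreal (measure_pmf.prob (bind_pmf p f) S) \<le> ennreal (measure_pmf.prob (bind_pmf p g) S) + ennreal e"
    by (simp add: measure_pmf.emeasure_eq_measure)
  then have "ennreal (measure_pmf.prob (bind_pmf p f) S) \<le> ennreal (measure_pmf.prob (bind_pmf p g) S + e)"
    using assms(1) by (simp add: ennreal_plus)
  then show "measure_pmf.prob (bind_pmf p f) S \<le> measure_pmf.prob (bind_pmf p g) S + e"
    using assms(1) by (simp add: ennreal_le_iff add_nonneg_nonneg del: ennreal_plus)
qed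

lemma pair_pmf_as_bind: "pair_pmf r q = bind_pmf r (\<lambda>x. map_pmf (Pair x) q)"
  by (simp add: pair_pmf_def map_pmf_def)

lemma tvb_pair2: "0 \<le> e \<Longrightarrow> tvb q1 q2 e \<Longrightarrow> tvb (pair_pmf r q1) (pair_pmf r q2) e"
  unfolding pair_pmf_as_bind by (intro tvb_bind tvb_map)

lemma tvb_pair1: "0 \<le> e \<Longrightarrow> tvb q1 q2 e \<Longrightarrow> tvb (pair_pmf q1 r) (pair_pmf q2 r) e"
  by (subst (1 2) pair_commute_pmf) (intro tvb_map tvb_pair2)

lemma tvb_pair: "0 \<le> e1 \<Longrightarrow> 0 \<le> e2 \<Longrightarrow> tvb p1 q1 e1 \<Longrightarrow> tvb p2 q2 e2 \<Longrightarrow>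
   tvb (pair_pmf p1 p2) (pair_pmf q1 q2) (e1 + e2)"
  by (rule tvb_trans[OF tvb_pair1 tvb_pair2])

lemma tvb_Pi:
  assumes "finite I" "\<And>k. k \<in> I \<Longrightarrow> tvb (p k) (q k) (e k)" "\<And>k. k \<in> I \<Longrightarrow> 0 \<le> e k"
  shows "tvb (Pi_pmf I dflt p) (Pi_pmf I dflt q) (\<Sum>k\<in>I. e k)"
  using assms
proof (induction I rule: finite_induct)
  case empty
  then show ?case by (simp add: tvb_refl)
next
  case (insert x A)
  have "tvb (pair_pmf (p x) (Pi_pmf A dflt p)) (pair_pmf (q x) (Pi_pmf A dflt q)) (e x + (\<Sum>k\<in>A. e k))"
    using insert by (intro tvb_pair sum_nonneg) auto
  then show ?case using insert by (simp add: Pi_pmf_insert tvb_map)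
qed



lemma bernoulli_1: "bernoulli_pmf 1 = return_pmf True"
proof -
  have "set_pmf (bernoulli_pmf 1) \<subseteq> {True}"
    by (auto simp: set_pmf_iff) (metis (full_types) pmf_bernoulli_False diff_self order_refl zero_le_one)
  then show ?thesis by (simp add: set_pmf_subset_singleton)
qed

lemma bernoulli_0: "bernoulli_pmf 0 = return_pmf False"
proof -
  have "set_pmf (bernoulli_pmf 0) \<subseteq> {False}"
    by (auto simp: set_pmf_iff)
  then show ?thesis by (simp add: set_pmf_subset_singleton)
qed

lemma quant_cell:
  assumes d: "d > 0" and c: "of_int n * d \<le> y" "y \<le> (of_int n + 1) * d"
  shows "quant d y = map_pmf (\<lambda>b. if b then (of_int n + 1) * d else of_int n * d)
                        (bernoulli_pmf ((y - of_int n * d) / d))"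
proof -
  have c1: "of_int n \<le> y / d" "y / d \<le> of_int n + 1" using c d by (auto simp: field_simps)
  have "\<lceil>y / d\<rceil> = n + 1 \<or> \<lceil>y / d\<rceil> = n"
  proof -
    have "\<lceil>y / d\<rceil> \<le> n + 1" using c1 by (simp add: ceiling_le_iff)
    moreover have "of_int n \<le> (of_int \<lceil>y / d\<rceil> :: real)" using c1 le_of_int_ceiling order_trans by blast
    then have "n \<le> \<lceil>y / d\<rceil>" by linarith
    ultimately show ?thesis by linarith
  qed
  then show ?thesis
  proof
    assume "\<lceil>y / d\<rceil> = n + 1"
    then have e: "\<lceil>y / d\<rceil> - 1 = n" by simp
    show ?thesis unfolding quant_def Let_def e by simp
  next
    assume h: "\<lceil>y / d\<rceil> = n"
    then have "y / d \<le> of_int n" by (metis le_of_int_ceiling)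
    then have yd: "y = of_int n * d" using c1 d by (auto simp: field_simps)
    have "quant d y = map_pmf (\<lambda>b. if b then (of_int (n - 1) + 1) * d else of_int (n - 1) * d)
            (bernoulli_pmf ((y - of_int (n - 1) * d) / d))"
      unfolding quant_def Let_def h by simp
    also have "(y - of_int (n - 1) * d) / d = 1" using yd d by (simp add: field_simps)
    finally show ?thesis using yd d by (simp add: bernoulli_1 bernoulli_0)
  qed
qed

lemma tvb_bernoulli:
  assumes "0 \<le> a" "a \<le> 1" "0 \<le> b" "b \<le> 1"
  shows "tvb (bernoulli_pmf a) (bernoulli_pmf b) \<bar>a - b\<bar>"
  unfolding tvb_def
proof
  fix S :: "bool set"
  have "S = {} \<or> S = {True} \<or> S = {False} \<or> S = UNIV"
    by (metis UNIV_eq_I is_singletonI' is_singleton_some_elem)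
  then show "measure_pmf.prob (bernoulli_pmf a) S \<le> measure_pmf.prob (bernoulli_pmf b) S + \<bar>a - b\<bar>"
    using assms by (auto simp: measure_measure_pmf_finite UNIV_bool)
qed

lemma tvb_quant_cell:
  assumes d: "d > 0" and c: "of_int n * d \<le> y" "y \<le> (of_int n + 1) * d"
    "of_int n * d \<le> y'" "y' \<le> (of_int n + 1) * d"
  shows "tvb (quant d y) (quant d y') (\<bar>y - y'\<bar> / d)"
proof -
  have "tvb (bernoulli_pmf ((y - of_int n * d) / d)) (bernoulli_pmf ((y' - of_int n * d) / d))
          \<bar>(y - of_int n * d) / d - (y' - of_int n * d) / d\<bar>"
    using c d by (intro tvb_bernoulli) (auto simp: field_simps)
  also have "\<bar>(y - of_int n * d) / d - (y' - of_int n * d) / d\<bar> = \<bar>y - y'\<bar> / d"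
    using d by (simp add: diff_divide_distrib[symmetric])
  finally show ?thesis
    unfolding quant_cell[OF d c(1,2)] quant_cell[OF d c(3,4)] by (rule tvb_map)
qed

lemma tvb_quant_le:
  assumes d: "d > 0" and yy: "y \<le> y'"
  shows "tvb (quant d y) (quant d y') ((y' - y) / d) \<and> tvb (quant d y') (quant d y) ((y' - y) / d)"
proof (cases "y' - y < d")
  case False
  then have "1 \<le> (y' - y) / d" using d by (simp add: field_simps)
  then show ?thesis unfolding tvb_def
    by (smt (verit) measure_nonneg measure_pmf.prob_le_1)
next
  case True
  define k where "k = \<lfloor>y' / d\<rfloor>"
  have k1: "of_int k * d \<le> y'" "y' \<le> (of_int k + 1) * d"
  proof -
    have "of_int k \<le> y' / d" "y' / d < of_int k + 1" unfolding k_def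
      by (simp_all add: of_int_floor_le real_of_int_floor_add_one_gt)
    then show "of_int k * d \<le> y'" "y' \<le> (of_int k + 1) * d" using d
      by (simp_all add: field_simps)
  qed
  show ?thesis
  proof (cases "of_int k * d \<le> y")
    case True
    then show ?thesis using tvb_quant_cell[OF d True _ k1] tvb_quant_cell[OF d k1 True] yy k1
      by auto
  next
    case False
    have k0: "of_int (k - 1) * d \<le> y" "y \<le> (of_int (k - 1) + 1) * d"
      using False \<open>y' - y < d\<close> k1 by (auto simp: algebra_simps)
    have g0: "of_int (k - 1) * d \<le> of_int k * d" "of_int k * d \<le> (of_int (k - 1) + 1) * d"
      using d by (auto simp: algebra_simps)
    have g1: "of_int k * d \<le> of_int k * d" "of_int k * d \<le> (of_int k + 1) * d"
      using d by (auto simp: algebra_simps)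
    have a1: "tvb (quant d y) (quant d (of_int k * d)) (\<bar>y - of_int k * d\<bar> / d)"
      by (rule tvb_quant_cell[OF d k0 g0])
    have a2: "tvb (quant d (of_int k * d)) (quant d y) (\<bar>of_int k * d - y\<bar> / d)"
      by (rule tvb_quant_cell[OF d g0 k0])
    have b1: "tvb (quant d (of_int k * d)) (quant d y') (\<bar>of_int k * d - y'\<bar> / d)"
      by (rule tvb_quant_cell[OF d g1 k1])
    have b2: "tvb (quant d y') (quant d (of_int k * d)) (\<bar>y' - of_int k * d\<bar> / d)"
      by (rule tvb_quant_cell[OF d k1 g1])
    have e: "\<bar>y - of_int k * d\<bar> / d + \<bar>of_int k * d - y'\<bar> / d = (y' - y) / d"
      "\<bar>y' - of_int k * d\<bar> / d + \<bar>of_int k * d - y\<bar> / d = (y' - y) / d"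
      using False k1 by (auto simp: add_divide_distrib[symmetric])
    show ?thesis using tvb_trans[OF a1 b1] tvb_trans[OF b2 a2] e by simp
  qed
qed

lemma tvb_quant:
  assumes d: "d > 0"
  shows "tvb (quant d y) (quant d y') (\<bar>y - y'\<bar> / d)"
proof (cases "y \<le> y'")
  case True
  then show ?thesis using tvb_quant_le[OF d True] by simp
next
  case False
  then show ?thesis using tvb_quant_le[OF d, of y' y] by simp
qed

lemma tvb_quant_vec:
  assumes d: "d > 0"
  shows "tvb (quant_vec d v) (quant_vec d v') (l1norm (v - v') / d)"
proof -
  have "tvb (Pi_pmf UNIV 0 (\<lambda>k. quant d (v $ k))) (Pi_pmf UNIV 0 (\<lambda>k. quant d (v' $ k)))
           (\<Sum>k\<in>UNIV. \<bar>v $ k - v' $ k\<bar> / d)"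
    using d by (intro tvb_Pi tvb_quant) auto
  then show ?thesis unfolding quant_vec_def l1norm_def
    by (simp add: sum_divide_distrib tvb_map)
qed



lemma l1_nonneg: "0 \<le> l1norm v" unfolding l1norm_def by (simp add: sum_nonneg)
lemma l1_add: "l1norm (x + y) \<le> l1norm x + l1norm y"
  unfolding l1norm_def by (simp add: sum.distrib[symmetric] sum_mono abs_triangle_ineq)
lemma l1_scale: "l1norm (c *\<^sub>R x) = \<bar>c\<bar> * l1norm x"
  unfolding l1norm_def by (simp add: abs_mult sum_distrib_left)
lemma l1_neg: "l1norm (- x) = l1norm x"
  unfolding l1norm_def by simp
lemma l1_diff: "l1norm (x - y) \<le> l1norm x + l1norm y"
  using l1_add[of x "-y"] l1_neg[of y] by simp
lemma l1_zero[simp]: "l1norm 0 = 0" unfolding l1norm_def by simp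
lemma l1_sum: "l1norm (sum f A) \<le> (\<Sum>k\<in>A. l1norm (f k))"
proof (induction A rule: infinite_finite_induct)
  case (insert x F)
  then show ?case using l1_add[of "f x" "sum f F"] by simp
qed (auto)
lemma l1_le_norm: "l1norm (x :: real^'n) \<le> real CARD('n) * norm x"
  unfolding l1norm_def using sum_mono[of UNIV "\<lambda>k. \<bar>x $ k\<bar>" "\<lambda>k. norm x"]
  by (simp add: component_le_norm_cart)
lemma norm_le_l1: "norm x \<le> l1norm x"
  unfolding l1norm_def by (rule norm_le_l1_cart)

lemma rho_psi_0[simp]: "rho_psi dl c lam 0 = 0" unfolding rho_psi_def by simp
lemma rho_theta_0[simp]: "rho_theta dl c r lam Cz Pz u 0 = 0" unfolding rho_theta_def by simp

lemma rho_psi_Suc: "rho_psi dl c lam (Suc t) = (1 - \<bar>c\<bar>) * rho_psi dl c lam t + 2 * dl * lam t"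
  unfolding rho_psi_def
  apply (subst sum.lessThan_Suc_shift)
  apply (simp add: sum_distrib_left algebra_simps)
  done

lemma rho_theta_Suc: "rho_theta dl c r lam Cz Pz u (Suc t)
   = (1 - \<bar>r\<bar>) * rho_theta dl c r lam Cz Pz u t
     + (Cz * Pz ^ t + 1 / \<bar>u\<bar>) * (rho_psi dl c lam (t + 1) + rho_psi dl c lam t)"
proof -
  have "(\<Sum>p<t. (1 - \<bar>r\<bar>) ^ (Suc t - p - 1) * (Cz * Pz ^ p + 1 / \<bar>u\<bar>)
             * (rho_psi dl c lam (p + 1) + rho_psi dl c lam p))
      = (\<Sum>p<t. (1 - \<bar>r\<bar>) * ((1 - \<bar>r\<bar>) ^ (t - p - 1) * (Cz * Pz ^ p + 1 / \<bar>u\<bar>)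
             * (rho_psi dl c lam (p + 1) + rho_psi dl c lam p)))"
  proof (rule sum.cong)
    fix p assume "p \<in> {..<t}"
    then have "Suc t - p - 1 = Suc (t - p - 1)" by auto
    then show "(1 - \<bar>r\<bar>) ^ (Suc t - p - 1) * (Cz * Pz ^ p + 1 / \<bar>u\<bar>)
             * (rho_psi dl c lam (p + 1) + rho_psi dl c lam p)
      = (1 - \<bar>r\<bar>) * ((1 - \<bar>r\<bar>) ^ (t - p - 1) * (Cz * Pz ^ p + 1 / \<bar>u\<bar>)
             * (rho_psi dl c lam (p + 1) + rho_psi dl c lam p))" by simp
  qed simp
  then show ?thesis unfolding rho_theta_def
    by (simp add: sum_distrib_left[symmetric])
qed

context
  fixes R C :: "real^'m::finite^'m" and gl :: "'m \<Rightarrow> real^'d::finite \<Rightarrow> 'x \<Rightarrow> real^'d"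
    and i :: 'm and lam :: "nat \<Rightarrow> real" and th0 ps0 :: "real^'d"
    and mth mps :: "'m \<Rightarrow> nat \<Rightarrow> real^'d"
begin

abbreviation "TH D t \<equiv> fst (qldp_traj R C gl i lam th0 ps0 mth mps D t)"
abbreviation "PS D t \<equiv> snd (qldp_traj R C gl i lam th0 ps0 mth mps D t)"
definition "GG D t = (1 / real (t + 1)) *\<^sub>R (\<Sum>k\<le>t. gl i (TH D t) (D k))"
definition "aa t = 1 / (real CARD('m) * (zseq R t i $ i))"

lemma TH_0: "TH D 0 = th0" and PS_0: "PS D 0 = ps0" by simp_all

lemma PS_Suc: "PS D (Suc t) = (1 + C $ i $ i) *\<^sub>R PS D t + (\<Sum>j\<in>N_in C i. C $ i $ j *\<^sub>R mps j t)
    + lam t *\<^sub>R GG D t"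
  by (simp add: Let_def split_beta GG_def)

lemma TH_Suc: "TH D (Suc t) = (1 + R $ i $ i) *\<^sub>R TH D t + (\<Sum>j\<in>N_in R i. R $ i $ j *\<^sub>R mth j t)
    - aa t *\<^sub>R (PS D (Suc t) - PS D t)"
  by (simp add: Let_def split_beta GG_def aa_def)

lemma dPS: "PS D (Suc t) - PS D' (Suc t) = (1 + C $ i $ i) *\<^sub>R (PS D t - PS D' t)
    + lam t *\<^sub>R (GG D t - GG D' t)"
  unfolding PS_Suc by (simp add: algebra_simps)

lemma dTH: "TH D (Suc t) - TH D' (Suc t) = (1 + R $ i $ i) *\<^sub>R (TH D t - TH D' t)
    - aa t *\<^sub>R ((PS D (Suc t) - PS D' (Suc t)) - (PS D t - PS D' t))"
  by (subst (1 2) TH_Suc) (simp add: algebra_simps)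

lemma dTH2: "TH D (Suc t) - TH D' (Suc t) = (1 + R $ i $ i) *\<^sub>R (TH D t - TH D' t)
    - aa t *\<^sub>R ((C $ i $ i) *\<^sub>R (PS D t - PS D' t) + lam t *\<^sub>R (GG D t - GG D' t))"
  unfolding dTH dPS by (simp add: algebra_simps)

lemma GG_bound:
  assumes "\<And>\<theta> x. l1norm (gl i \<theta> x) \<le> dl"
  shows "l1norm (GG D t) \<le> dl"
proof -
  have "l1norm (GG D t) = (1 / real (t + 1)) * l1norm (\<Sum>k\<le>t. gl i (TH D t) (D k))"
    unfolding GG_def l1_scale by simp
  also have "\<dots> \<le> (1 / real (t + 1)) * (\<Sum>k\<le>t. l1norm (gl i (TH D t) (D k)))"
    by (intro mult_left_mono l1_sum) auto
  also have "\<dots> \<le> (1 / real (t + 1)) * (\<Sum>k\<le>t. dl)"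
    by (intro mult_left_mono sum_mono assms) auto
  finally show ?thesis by simp
qed

lemma dGG_bound1:
  assumes "\<And>\<theta> x. l1norm (gl i \<theta> x) \<le> dl"
  shows "l1norm (GG D t - GG D' t) \<le> 2 * dl"
  using l1_diff[of "GG D t" "GG D' t"] GG_bound[OF assms, of D t] GG_bound[OF assms, of D' t] by simp

lemma dGG_bound2:
  assumes dl: "\<And>\<theta> x. l1norm (gl i \<theta> x) \<le> dl"
    and lip: "\<And>\<theta> \<theta>' x. norm (gl i \<theta> x - gl i \<theta>' x) \<le> L * norm (\<theta> - \<theta>')"
    and DD: "\<And>k. k \<le> t \<Longrightarrow> k \<noteq> k0 \<Longrightarrow> D k = D' k"
  shows "l1norm (GG D t - GG D' t)
     \<le> real CARD('d) * \<bar>L\<bar> * l1norm (TH D t - TH D' t) + 2 * dl / (real t + 1)"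
proof -
  define E where "E = l1norm (TH D t - TH D' t)"
  have dl0: "0 \<le> dl" using dl[of undefined undefined] l1_nonneg order_trans by blast
  have E0: "0 \<le> E" unfolding E_def by (rule l1_nonneg)
  have lipk: "l1norm (gl i \<theta> x - gl i \<theta>' x) \<le> real CARD('d) * \<bar>L\<bar> * l1norm (\<theta> - \<theta>')" for \<theta> \<theta>' x
  proof -
    have "l1norm (gl i \<theta> x - gl i \<theta>' x) \<le> real CARD('d) * norm (gl i \<theta> x - gl i \<theta>' x)"
      by (rule l1_le_norm)
    also have "\<dots> \<le> real CARD('d) * (\<bar>L\<bar> * l1norm (\<theta> - \<theta>'))"
    proof (intro mult_left_mono)
      have "L * norm (\<theta> - \<theta>') \<le> \<bar>L\<bar> * l1norm (\<theta> - \<theta>')"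
        by (meson abs_ge_self abs_ge_zero mult_mono norm_ge_zero norm_le_l1 order.trans)
      then show "norm (gl i \<theta> x - gl i \<theta>' x) \<le> \<bar>L\<bar> * l1norm (\<theta> - \<theta>')" using lip order_trans by blast
    qed auto
    finally show ?thesis by (simp add: mult.assoc)
  qed
  have termk: "l1norm (gl i (TH D t) (D k) - gl i (TH D' t) (D' k))
      \<le> real CARD('d) * \<bar>L\<bar> * E + (if k = k0 then 2 * dl else 0)" if "k \<le> t" for k
  proof (cases "k = k0")
    case True
    have "l1norm (gl i (TH D t) (D k) - gl i (TH D' t) (D' k)) \<le> 2 * dl"
      using l1_diff[of "gl i (TH D t) (D k)" "gl i (TH D' t) (D' k)"] dl[of "TH D t" "D k"] dl[of "TH D' t" "D' k"] by simp
    moreover have "0 \<le> real CARD('d) * \<bar>L\<bar> * E" using E0 by simp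
    ultimately show ?thesis using True by simp
  next
    case False
    then show ?thesis using DD[OF that False] lipk E_def by simp
  qed
  have "GG D t - GG D' t = (1 / real (t + 1)) *\<^sub>R (\<Sum>k\<le>t. gl i (TH D t) (D k) - gl i (TH D' t) (D' k))"
    unfolding GG_def by (simp add: sum_subtractf scaleR_diff_right)
  then have "l1norm (GG D t - GG D' t) = (1 / real (t + 1)) * l1norm (\<Sum>k\<le>t. gl i (TH D t) (D k) - gl i (TH D' t) (D' k))"
    by (simp add: l1_scale)
  also have "\<dots> \<le> (1 / real (t + 1)) * (\<Sum>k\<le>t. l1norm (gl i (TH D t) (D k) - gl i (TH D' t) (D' k)))"
    by (intro mult_left_mono l1_sum) auto
  also have "\<dots> \<le> (1 / real (t + 1)) * (\<Sum>k\<le>t. real CARD('d) * \<bar>L\<bar> * E + (if k = k0 then 2 * dl else 0))"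
    by (intro mult_left_mono sum_mono termk) auto
  also have "\<dots> \<le> (1 / real (t + 1)) * (real (t + 1) * (real CARD('d) * \<bar>L\<bar> * E) + 2 * dl)"
    using dl0 by (intro mult_left_mono) (auto simp: sum.distrib)
  also have "\<dots> = real CARD('d) * \<bar>L\<bar> * E + 2 * dl / (real t + 1)"
    by (simp add: field_simps)
  finally show ?thesis unfolding E_def .
qed


lemma sens1:
  assumes dl: "\<And>\<theta> x. l1norm (gl i \<theta> x) \<le> dl" and lam: "\<And>t. 0 \<le> lam t"
    and Cii: "C $ i $ i < 0" "0 < 1 + C $ i $ i" and Rii: "R $ i $ i < 0" "0 < 1 + R $ i $ i"
    and aa: "\<And>t. \<bar>aa t\<bar> \<le> Cz * Pz ^ t + 1 / \<bar>u\<bar>"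
  shows "l1norm (TH D t - TH D' t) \<le> rho_theta dl (C $ i $ i) (R $ i $ i) lam Cz Pz u t
       \<and> l1norm (PS D t - PS D' t) \<le> rho_psi dl (C $ i $ i) lam t"
proof (induction t)
  case 0
  then show ?case by simp
next
  case (Suc t)
  define e where "e = l1norm (TH D t - TH D' t)"
  define f where "f = l1norm (PS D t - PS D' t)"
  define f' where "f' = l1norm (PS D (Suc t) - PS D' (Suc t))"
  have IH: "e \<le> rho_theta dl (C $ i $ i) (R $ i $ i) lam Cz Pz u t" "f \<le> rho_psi dl (C $ i $ i) lam t"
    using Suc unfolding e_def f_def by auto
  have cabs: "\<bar>C $ i $ i\<bar> = - C $ i $ i" "\<bar>R $ i $ i\<bar> = - R $ i $ i" using Cii Rii by auto
  have f'b: "f' \<le> rho_psi dl (C $ i $ i) lam (Suc t)"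
  proof -
    have "f' \<le> l1norm ((1 + C $ i $ i) *\<^sub>R (PS D t - PS D' t)) + l1norm (lam t *\<^sub>R (GG D t - GG D' t))"
      unfolding f'_def dPS by (rule l1_add)
    also have "\<dots> = (1 + C $ i $ i) * f + lam t * l1norm (GG D t - GG D' t)"
      unfolding l1_scale f_def using Cii lam[of t] by simp
    also have "\<dots> \<le> (1 + C $ i $ i) * rho_psi dl (C $ i $ i) lam t + lam t * (2 * dl)"
      using IH Cii lam[of t] dGG_bound1[OF dl, of D t D'] by (intro add_mono mult_left_mono) auto
    also have "\<dots> = rho_psi dl (C $ i $ i) lam (Suc t)"
      unfolding rho_psi_Suc cabs by (simp add: algebra_simps)
    finally show ?thesis .
  qed
  have e'b: "l1norm (TH D (Suc t) - TH D' (Suc t)) \<le> rho_theta dl (C $ i $ i) (R $ i $ i) lam Cz Pz u (Suc t)"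
  proof -
    have "l1norm (TH D (Suc t) - TH D' (Suc t)) \<le> l1norm ((1 + R $ i $ i) *\<^sub>R (TH D t - TH D' t))
        + l1norm (aa t *\<^sub>R ((PS D (Suc t) - PS D' (Suc t)) - (PS D t - PS D' t)))"
      unfolding dTH by (rule l1_diff)
    also have "\<dots> \<le> (1 + R $ i $ i) * e + \<bar>aa t\<bar> * (f' + f)"
      unfolding l1_scale e_def f_def f'_def using Rii
      by (intro add_mono mult_left_mono l1_diff) auto
    also have "\<dots> \<le> (1 + R $ i $ i) * rho_theta dl (C $ i $ i) (R $ i $ i) lam Cz Pz u t
        + (Cz * Pz ^ t + 1 / \<bar>u\<bar>) * (rho_psi dl (C $ i $ i) lam (t + 1) + rho_psi dl (C $ i $ i) lam t)"
    proof -
      have X: "\<bar>aa t\<bar> * (f' + f) \<le> (Cz * Pz ^ t + 1 / \<bar>u\<bar>) * (rho_psi dl (C $ i $ i) lam (t + 1) + rho_psi dl (C $ i $ i) lam t)"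
      proof (rule mult_mono)
        show "f' + f \<le> rho_psi dl (C $ i $ i) lam (t + 1) + rho_psi dl (C $ i $ i) lam t"
          using f'b IH by simp
        show "0 \<le> f' + f" unfolding f'_def f_def by (intro add_nonneg_nonneg l1_nonneg)
        show "0 \<le> Cz * Pz ^ t + 1 / \<bar>u\<bar>" using aa[of t] by linarith
      qed (use aa in auto)
      have Y: "(1 + R $ i $ i) * e \<le> (1 + R $ i $ i) * rho_theta dl (C $ i $ i) (R $ i $ i) lam Cz Pz u t"
        using IH Rii by (intro mult_left_mono) auto
      show ?thesis using X Y by linarith
    qed
    also have "\<dots> = rho_theta dl (C $ i $ i) (R $ i $ i) lam Cz Pz u (Suc t)"
      unfolding rho_theta_Suc cabs by simp
    finally show ?thesis .
  qed
  show ?case using e'b f'b unfolding f'_def by simp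
qed

lemma rec2:
  assumes dl: "\<And>\<theta> x. l1norm (gl i \<theta> x) \<le> dl"
    and lip: "\<And>\<theta> \<theta>' x. norm (gl i \<theta> x - gl i \<theta>' x) \<le> L * norm (\<theta> - \<theta>')"
    and lam: "\<And>t. 0 \<le> lam t"
    and Cii: "C $ i $ i < 0" "0 < 1 + C $ i $ i" and Rii: "R $ i $ i < 0" "0 < 1 + R $ i $ i"
    and aa: "\<And>t. \<bar>aa t\<bar> \<le> A"
    and DD: "\<And>k. k < T \<Longrightarrow> k \<noteq> k0 \<Longrightarrow> D k = D' k" and t: "Suc t < T"
  shows "l1norm (PS D (Suc t) - PS D' (Suc t)) \<le> (1 + C $ i $ i) * l1norm (PS D t - PS D' t)
           + lam t * (real CARD('d) * \<bar>L\<bar> * l1norm (TH D t - TH D' t) + 2 * dl / (real t + 1))"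
    "l1norm (TH D (Suc t) - TH D' (Suc t)) \<le> (1 + R $ i $ i) * l1norm (TH D t - TH D' t)
       + A * ((1 - (1 + C $ i $ i)) * l1norm (PS D t - PS D' t)
           + lam t * (real CARD('d) * \<bar>L\<bar> * l1norm (TH D t - TH D' t) + 2 * dl / (real t + 1)))"
proof -
  have h: "l1norm (GG D t - GG D' t) \<le> real CARD('d) * \<bar>L\<bar> * l1norm (TH D t - TH D' t) + 2 * dl / (real t + 1)"
    using dGG_bound2[OF dl lip, of t k0 D D'] DD t by simp
  show "l1norm (PS D (Suc t) - PS D' (Suc t)) \<le> (1 + C $ i $ i) * l1norm (PS D t - PS D' t)
           + lam t * (real CARD('d) * \<bar>L\<bar> * l1norm (TH D t - TH D' t) + 2 * dl / (real t + 1))"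
  proof -
    have "l1norm (PS D (Suc t) - PS D' (Suc t)) \<le> l1norm ((1 + C $ i $ i) *\<^sub>R (PS D t - PS D' t)) + l1norm (lam t *\<^sub>R (GG D t - GG D' t))"
      unfolding dPS by (rule l1_add)
    also have "\<dots> = (1 + C $ i $ i) * l1norm (PS D t - PS D' t) + lam t * l1norm (GG D t - GG D' t)"
      unfolding l1_scale using Cii lam[of t] by simp
    also have "\<dots> \<le> (1 + C $ i $ i) * l1norm (PS D t - PS D' t)
           + lam t * (real CARD('d) * \<bar>L\<bar> * l1norm (TH D t - TH D' t) + 2 * dl / (real t + 1))"
      using h lam[of t] by (intro add_left_mono mult_left_mono) auto
    finally show ?thesis .
  qed
  show "l1norm (TH D (Suc t) - TH D' (Suc t)) \<le> (1 + R $ i $ i) * l1norm (TH D t - TH D' t)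
       + A * ((1 - (1 + C $ i $ i)) * l1norm (PS D t - PS D' t)
           + lam t * (real CARD('d) * \<bar>L\<bar> * l1norm (TH D t - TH D' t) + 2 * dl / (real t + 1)))"
  proof -
    have "l1norm (TH D (Suc t) - TH D' (Suc t)) \<le> l1norm ((1 + R $ i $ i) *\<^sub>R (TH D t - TH D' t))
        + l1norm (aa t *\<^sub>R ((C $ i $ i) *\<^sub>R (PS D t - PS D' t) + lam t *\<^sub>R (GG D t - GG D' t)))"
      unfolding dTH2 by (rule l1_diff)
    also have "\<dots> \<le> (1 + R $ i $ i) * l1norm (TH D t - TH D' t)
        + \<bar>aa t\<bar> * ((1 - (1 + C $ i $ i)) * l1norm (PS D t - PS D' t) + lam t * l1norm (GG D t - GG D' t))"
    proof -
      have "l1norm ((C $ i $ i) *\<^sub>R (PS D t - PS D' t) + lam t *\<^sub>R (GG D t - GG D' t))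
          \<le> (1 - (1 + C $ i $ i)) * l1norm (PS D t - PS D' t) + lam t * l1norm (GG D t - GG D' t)"
        using l1_add[of "(C $ i $ i) *\<^sub>R (PS D t - PS D' t)" "lam t *\<^sub>R (GG D t - GG D' t)"]
        unfolding l1_scale using Cii lam[of t] by simp
      then show ?thesis unfolding l1_scale using Rii by (intro add_mono mult_left_mono) auto
    qed
    also have "\<dots> \<le> (1 + R $ i $ i) * l1norm (TH D t - TH D' t)
       + A * ((1 - (1 + C $ i $ i)) * l1norm (PS D t - PS D' t)
           + lam t * (real CARD('d) * \<bar>L\<bar> * l1norm (TH D t - TH D' t) + 2 * dl / (real t + 1)))"
    proof (intro add_left_mono mult_mono aa add_mono order_refl mult_left_mono h lam)
      show "0 \<le> (1 - (1 + C $ i $ i)) * l1norm (PS D t - PS D' t) + lam t * l1norm (GG D t - GG D' t)"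
        using Cii lam[of t] by (intro add_nonneg_nonneg mult_nonneg_nonneg l1_nonneg) auto
      show "0 \<le> A" using aa[of t] by linarith
      show "0 \<le> l1norm (GG D t - GG D' t)" by (rule l1_nonneg)
    qed
    finally show ?thesis .
  qed
qed

lemma mech_tvb:
  assumes "\<And>t. 0 < dstep t"
  shows "tvb (qldp_mech R C gl i lam dstep T th0 ps0 mth mps D) (qldp_mech R C gl i lam dstep T th0 ps0 mth mps D')
     (\<Sum>t<T. (l1norm (TH D t - TH D' t) + l1norm (PS D t - PS D' t)) / dstep t)"
proof -
  have "tvb (qldp_mech R C gl i lam dstep T th0 ps0 mth mps D) (qldp_mech R C gl i lam dstep T th0 ps0 mth mps D')
     (\<Sum>t<T. l1norm (TH D t - TH D' t) / dstep t + l1norm (PS D t - PS D' t) / dstep t)"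
    unfolding qldp_mech_def Let_def using assms
    by (intro tvb_Pi tvb_pair tvb_quant_vec add_nonneg_nonneg divide_nonneg_pos l1_nonneg) auto
  then show ?thesis by (simp add: add_divide_distrib)
qed

end



lemma lam_tendsto:
  assumes "0 < \<nu>"
  shows "(\<lambda>t. lam0 / (real t + 1) powr \<nu>) \<longlonglongrightarrow> 0"
proof -
  have f: "LIM t sequentially. real (Suc t) :> at_top"
    using filterlim_real_sequentially filterlim_sequentially_Suc by blast
  have "(\<lambda>t. real (Suc t) powr (- \<nu>)) \<longlonglongrightarrow> 0"
    using assms by (intro tendsto_neg_powr f) auto
  then have "(\<lambda>t. lam0 * real (Suc t) powr (- \<nu>)) \<longlonglongrightarrow> 0"
    by (rule tendsto_mult_right_zero)
  moreover have "lam0 * real (Suc t) powr (- \<nu>) = lam0 / (real t + 1) powr \<nu>" for t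
    by (simp add: powr_minus divide_inverse add.commute)
  ultimately show ?thesis by simp
qed

lemma ratio_bound:
  assumes "0 < \<nu>" "\<nu> < 1"
  shows "((real t + 2) / (real t + 1)) powr (1 + \<nu>) \<le> 1 + 3 / (real t + 1)"
proof -
  define x where "x = 1 / (real t + 1)"
  have x: "0 < x" "x \<le> 1" unfolding x_def by auto
  have q: "(real t + 2) / (real t + 1) = 1 + x" unfolding x_def by (simp add: field_simps)
  have "(1 + x) powr (1 + \<nu>) \<le> (1 + x) powr 2"
    using x assms by (intro powr_mono) auto
  also have "\<dots> = (1 + x)^2" using x by (simp add: powr_realpow)
  also have "\<dots> \<le> 1 + 3 * x" using x by (simp add: power2_eq_square algebra_simps)
  finally show ?thesis unfolding q x_def by simp
qed

lemma seq_decay: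
  fixes c r A L1 B lam0 \<nu> :: real
  assumes c: "0 \<le> c" "c < 1" and r: "0 \<le> r" "r < 1" and A: "0 \<le> A" and L1: "0 \<le> L1"
    and B: "0 \<le> B" and lam0: "0 < lam0" and nu: "0 < \<nu>" "\<nu> < 1"
  shows "\<exists>K. \<forall>(e::nat\<Rightarrow>real) f N. e 0 = 0 \<and> f 0 = 0 \<and> (\<forall>t. 0 \<le> e t \<and> 0 \<le> f t) \<and>
     (\<forall>t. Suc t < N \<longrightarrow>
        f (Suc t) \<le> c * f t + lam0 / (real t + 1) powr \<nu> * (L1 * e t + B / (real t + 1)) \<and>
        e (Suc t) \<le> r * e t + A * ((1 - c) * f t + lam0 / (real t + 1) powr \<nu> * (L1 * e t + B / (real t + 1))))
     \<longrightarrow> (\<forall>t<N. e t + f t \<le> K / (real t + 1) powr (1 + \<nu>))"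
proof -
  define lam where "lam t = lam0 / (real t + 1) powr \<nu>" for t
  define \<rho> where "\<rho> = (1 + max r c) / 2"
  have \<rho>: "c < \<rho>" "r < \<rho>" "\<rho> < 1" "1/2 \<le> \<rho>" using c r unfolding \<rho>_def by auto
  define \<kappa> where "\<kappa> = A * (1 - c) / (\<rho> - c) + 1"
  have \<kappa>1: "1 \<le> \<kappa>" unfolding \<kappa>_def using A c \<rho> by auto
  have \<kappa>2: "A * (1 - c) + \<kappa> * c \<le> \<rho> * \<kappa>"
  proof -
    have "A * (1 - c) = (\<kappa> - 1) * (\<rho> - c)" unfolding \<kappa>_def using \<rho> by simp
    then show ?thesis using \<rho> by (simp add: algebra_simps)
  qed
  define G where "G = r + (A + \<kappa>) * lam0 * L1 + \<rho>"
  define M where "M = (A + \<kappa>) * B"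
  define \<rho>2 where "\<rho>2 = (1 + \<rho>) / 2"
  have G: "0 \<le> G" "\<rho> \<le> G" unfolding G_def using A \<kappa>1 lam0 L1 r \<rho> by auto
  have M: "0 \<le> M" unfolding M_def using A \<kappa>1 B by auto
  have \<rho>2: "\<rho> < \<rho>2" "\<rho>2 < 1" unfolding \<rho>2_def using \<rho> by auto
  have lam_pos: "0 < lam t" for t unfolding lam_def using lam0 by auto
  have lam_le: "lam t \<le> lam0" for t
  proof -
    have "1 \<le> (real t + 1) powr \<nu>" using nu by (intro ge_one_powr_ge_zero) auto
    then show ?thesis unfolding lam_def using lam0 by (simp add: divide_le_eq)
  qed
  have lam_div: "lam t / (real t + 1) = lam0 / (real t + 1) powr (1 + \<nu>)" for t
    unfolding lam_def by (simp add: powr_add)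
  have ev1: "eventually (\<lambda>t. (A + \<kappa>) * lam t * L1 \<le> \<rho> - r) sequentially"
  proof -
    have "(\<lambda>t. (A + \<kappa>) * L1 * lam t) \<longlonglongrightarrow> (A + \<kappa>) * L1 * 0"
      unfolding lam_def by (intro tendsto_mult tendsto_const lam_tendsto nu)
    then have "eventually (\<lambda>t. (A + \<kappa>) * L1 * lam t < \<rho> - r) sequentially"
      using \<rho> by (intro order_tendstoD(2)) auto
    then show ?thesis by eventually_elim (simp add: mult_ac)
  qed
  have ev2: "eventually (\<lambda>t. \<rho> * ((real t + 2) / (real t + 1)) powr (1 + \<nu>) \<le> \<rho>2) sequentially"
  proof -
    have "(\<lambda>t. inverse (real (Suc t))) \<longlonglongrightarrow> 0" by (rule LIMSEQ_inverse_real_of_nat)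
    then have "eventually (\<lambda>t. inverse (real (Suc t)) < (\<rho>2 - \<rho>) / (3 * \<rho>)) sequentially"
      using \<rho> \<rho>2 by (intro order_tendstoD(2)) auto
    then show ?thesis
    proof eventually_elim
      case (elim t)
      then have "3 / (real t + 1) \<le> (\<rho>2 - \<rho>) / \<rho>" using \<rho>
        by (simp add: field_simps)
      then have "\<rho> * (1 + 3 / (real t + 1)) \<le> \<rho>2" using \<rho> by (simp add: field_simps)
      moreover have "\<rho> * ((real t + 2) / (real t + 1)) powr (1 + \<nu>) \<le> \<rho> * (1 + 3 / (real t + 1))"
        using ratio_bound[OF nu] \<rho> by (intro mult_left_mono) auto
      ultimately show ?case by linarith
    qed
  qed
  obtain t0 where t0: "\<And>t. t \<ge> t0 \<Longrightarrow> (A + \<kappa>) * lam t * L1 \<le> \<rho> - r \<and>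
       \<rho> * ((real t + 2) / (real t + 1)) powr (1 + \<nu>) \<le> \<rho>2"
    using eventually_conj[OF ev1 ev2] unfolding eventually_sequentially by blast
  define U where "U = rec_nat 0 (\<lambda>_ u. G * u + M * lam0)"
  have U0: "U 0 = 0" and USuc: "U (Suc t) = G * U t + M * lam0" for t unfolding U_def by simp_all
  have Unn: "0 \<le> U t" for t
    by (induction t) (use G M lam0 in \<open>auto simp: U0 USuc\<close>)
  define W0 where "W0 = (\<Sum>s\<le>t0. U s * (real s + 1) powr (1 + \<nu>))"
  define K where "K = max W0 (2 * M * lam0 / (1 - \<rho>2))"
  show ?thesis
  proof (rule exI[of _ K], (rule allI)+, rule impI)
    fix e f :: "nat \<Rightarrow> real" and N
    assume H: "e 0 = 0 \<and> f 0 = 0 \<and> (\<forall>t. 0 \<le> e t \<and> 0 \<le> f t) \<and>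
     (\<forall>t. Suc t < N \<longrightarrow>
        f (Suc t) \<le> c * f t + lam0 / (real t + 1) powr \<nu> * (L1 * e t + B / (real t + 1)) \<and>
        e (Suc t) \<le> r * e t + A * ((1 - c) * f t + lam0 / (real t + 1) powr \<nu> * (L1 * e t + B / (real t + 1))))"
    have e0: "e 0 = 0" and f0: "f 0 = 0" and enn: "0 \<le> e t" and fnn: "0 \<le> f t" for t using H by auto
    have rec: "f (Suc t) \<le> c * f t + lam t * (L1 * e t + B / (real t + 1))"
      "e (Suc t) \<le> r * e t + A * ((1 - c) * f t + lam t * (L1 * e t + B / (real t + 1)))"
      if "Suc t < N" for t using H that unfolding lam_def by auto
    define V where "V t = e t + \<kappa> * f t" for t
    have Vnn: "0 \<le> V t" for t unfolding V_def using enn fnn \<kappa>1 by auto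
    have step: "V (Suc t) \<le> (r + (A + \<kappa>) * lam t * L1) * e t + \<rho> * \<kappa> * f t + M * (lam t / (real t + 1))"
      if "Suc t < N" for t
    proof -
      define z where "z = lam t / (real t + 1)"
      have h: "lam t * (L1 * e t + B / (real t + 1)) = lam t * L1 * e t + B * z"
        unfolding z_def by (simp add: distrib_left mult.assoc)
      have "V (Suc t) \<le> (r * e t + A * ((1 - c) * f t + lam t * (L1 * e t + B / (real t + 1))))
               + \<kappa> * (c * f t + lam t * (L1 * e t + B / (real t + 1)))"
        unfolding V_def using rec[OF that] \<kappa>1 by (smt (verit) mult_left_mono)
      also have "\<dots> = (r + (A + \<kappa>) * lam t * L1) * e t + (A * (1 - c) + \<kappa> * c) * f t + M * z"
        unfolding M_def h by (simp add: algebra_simps)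
      also have "\<dots> \<le> (r + (A + \<kappa>) * lam t * L1) * e t + (\<rho> * \<kappa>) * f t + M * z"
        by (intro add_right_mono add_left_mono mult_right_mono[OF \<kappa>2 fnn[of t]])
      finally show ?thesis unfolding z_def by simp
    qed
    have early: "V (Suc t) \<le> G * V t + M * lam0" if "Suc t < N" for t
    proof -
      have AK: "0 \<le> A + \<kappa>" using A \<kappa>1 by simp
      have a0: "(A + \<kappa>) * lam t * L1 \<le> (A + \<kappa>) * lam0 * L1"
        by (intro mult_right_mono mult_left_mono lam_le AK L1)
      have a1: "r + (A + \<kappa>) * lam t * L1 \<le> G" unfolding G_def using a0 \<rho> by linarith
      have a: "(r + (A + \<kappa>) * lam t * L1) * e t \<le> G * e t"
        by (rule mult_right_mono[OF a1 enn])
      have b: "\<rho> * \<kappa> * f t \<le> G * (\<kappa> * f t)"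
        using mult_right_mono[OF G(2), of "\<kappa> * f t"] \<kappa>1 fnn[of t] by (simp add: mult.assoc)
      have d: "M * (lam t / (real t + 1)) \<le> M * lam0"
      proof (intro mult_left_mono M)
        have "lam t / (real t + 1) \<le> lam t / 1"
          using lam_pos[of t] by (intro divide_left_mono) auto
        then show "lam t / (real t + 1) \<le> lam0" using lam_le[of t] by simp
      qed
      have GV: "G * V t = G * e t + G * (\<kappa> * f t)" unfolding V_def by (simp add: distrib_left)
      show ?thesis using step[OF that] a b d unfolding GV by linarith
    qed
    have VU: "t < N \<Longrightarrow> V t \<le> U t" for t
    proof (induction t)
      case 0 then show ?case by (simp add: V_def e0 f0 U0)
    next
      case (Suc t)
      then have "V t \<le> U t" by simp
      then have "G * V t \<le> G * U t" using G by (intro mult_left_mono) auto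
      then show ?case using early[OF Suc.prems] by (simp add: USuc)
    qed
    have late: "V (Suc t) \<le> \<rho> * V t + M * lam0 / (real t + 1) powr (1 + \<nu>)"
      if "Suc t < N" "t \<ge> t0" for t
    proof -
      have "(r + (A + \<kappa>) * lam t * L1) * e t \<le> \<rho> * e t"
        using t0[OF that(2)] enn[of t] by (intro mult_right_mono) auto
      then show ?thesis using step[OF that(1)] unfolding V_def lam_div by (simp add: algebra_simps)
    qed
    define p where "p = 1 + \<nu>"
    have W: "t < N \<Longrightarrow> V t * (real t + 1) powr p \<le> K" for t
    proof (induction t)
      case 0
      have "0 \<le> W0" unfolding W0_def by (intro sum_nonneg mult_nonneg_nonneg Unn) auto
      then have "0 \<le> K" unfolding K_def by (simp add: max.coboundedI1)
      then show ?case by (simp add: V_def e0 f0)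
    next
      case (Suc t)
      show ?case
      proof (cases "Suc t \<le> t0")
        case True
        have "V (Suc t) * (real (Suc t) + 1) powr p \<le> U (Suc t) * (real (Suc t) + 1) powr p"
          using VU[OF Suc.prems] by (intro mult_right_mono) auto
        also have "\<dots> \<le> W0" unfolding W0_def p_def
          using True by (intro member_le_sum[where f = "\<lambda>s. U s * (real s + 1) powr (1 + \<nu>)"]) (auto intro!: mult_nonneg_nonneg Unn)
        finally show ?thesis unfolding K_def by linarith
      next
        case False
        then have tt: "t \<ge> t0" by simp
        have IH: "V t * (real t + 1) powr p \<le> K" using Suc by simp
        define q where "q = ((real t + 2) / (real t + 1)) powr p"
        have q: "\<rho> * q \<le> \<rho>2" "0 \<le> q" using t0[OF tt] unfolding q_def p_def by auto
        have q2: "q \<le> 2"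
        proof -
          have "\<rho> * q \<le> \<rho> * 2" using q(1) \<rho> \<rho>2 by linarith
          moreover have "0 < \<rho>" using \<rho> by linarith
          ultimately show ?thesis by (simp add: mult_le_cancel_left_pos)
        qed
        have split: "(real (Suc t) + 1) powr p = q * (real t + 1) powr p"
          unfolding q_def by (simp add: powr_divide add.commute[of 1] add.commute[of 2])
        have "V (Suc t) * (real (Suc t) + 1) powr p
            \<le> (\<rho> * V t + M * lam0 / (real t + 1) powr p) * (q * (real t + 1) powr p)"
          unfolding split using late[OF Suc.prems tt] q by (intro mult_right_mono) (auto simp: p_def)
        also have "\<dots> = (\<rho> * q) * (V t * (real t + 1) powr p) + q * (M * lam0)"
          by (simp add: field_simps)
        also have "\<dots> \<le> \<rho>2 * K + 2 * (M * lam0)"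
        proof (rule add_mono)
          have "0 \<le> K" unfolding K_def using M lam0 \<rho>2 by (auto intro: max.coboundedI2)
          moreover have "0 \<le> V t * (real t + 1) powr p" using Vnn[of t] by simp
          ultimately show "(\<rho> * q) * (V t * (real t + 1) powr p) \<le> \<rho>2 * K"
            using \<rho>2 \<rho> by (intro mult_mono q(1) IH) auto
          show "q * (M * lam0) \<le> 2 * (M * lam0)"
            using M lam0 by (intro mult_right_mono q2) auto
        qed
        also have "\<dots> \<le> K"
        proof -
          have "2 * M * lam0 / (1 - \<rho>2) \<le> K" unfolding K_def by simp
          then have "2 * M * lam0 \<le> K * (1 - \<rho>2)" using \<rho>2 by (simp add: divide_le_eq)
          then show ?thesis by (simp add: algebra_simps)
        qed
        finally show ?thesis .
      qed
    qed
    show "\<forall>t<N. e t + f t \<le> K / (real t + 1) powr (1 + \<nu>)"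
    proof (intro allI impI)
      fix t assume "t < N"
      have "1 * f t \<le> \<kappa> * f t" by (rule mult_right_mono[OF \<kappa>1 fnn])
      then have "e t + f t \<le> V t" unfolding V_def by simp
      also have "\<dots> \<le> K / (real t + 1) powr (1 + \<nu>)"
        using W[OF \<open>t < N\<close>] by (simp add: p_def le_divide_eq)
      finally show "e t + f t \<le> K / (real t + 1) powr (1 + \<nu>)" .
    qed
  qed
qed



lemma term_bound:
  fixes x d P Sv K Q :: real
  assumes "0 < d" "0 < P" "0 < Sv" "x \<le> K / P" "K \<le> Q"
  shows "x / (d / Sv) \<le> Q / (d * (P / Sv))"
proof -
  have "x / (d / Sv) = x * Sv / d" by simp
  also have "\<dots> \<le> (K / P) * Sv / d" using assms by (intro divide_right_mono mult_right_mono) auto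
  also have "\<dots> = K / (d * (P / Sv))" using assms by (simp add: field_simps)
  also have "\<dots> \<le> Q / (d * (P / Sv))" using assms by (intro divide_right_mono) auto
  finally show ?thesis .
qed

lemma summable_pw:
  fixes a Q :: real
  assumes "1 < a"
  shows "summable (\<lambda>t. Q / (real t + 1) powr a)"
proof -
  have "summable (\<lambda>n. real n powr (- a))" using assms by (simp add: summable_real_powr_iff)
  then have "summable (\<lambda>n. real (Suc n) powr (- a))" by (subst summable_Suc_iff)
  then have "summable (\<lambda>n. Q * real (Suc n) powr (- a))" by (rule summable_mult)
  moreover have "(\<lambda>n. Q * real (Suc n) powr (- a)) = (\<lambda>t. Q / (real t + 1) powr a)"
    by (rule ext) (simp add: powr_minus_divide add.commute)
  ultimately show ?thesis by metis
qed

theorem theorem2: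
  fixes l :: "'m::finite \<Rightarrow> real^'d::finite \<Rightarrow> 'x \<Rightarrow> real"
    and gl :: "'m \<Rightarrow> real^'d \<Rightarrow> 'x \<Rightarrow> real^'d"
    and \<Phi> :: "'m \<Rightarrow> 'x measure"
    and R C :: "real^'m^'m"
    and \<kappa> L dl lam0 \<nu> Cz Pz :: real
    and i :: 'm
  assumes grad: "\<And>j \<theta> x. GDERIV (\<lambda>w. l j w x) \<theta> :> gl j \<theta> x"
    and prob: "\<And>j. prob_space (\<Phi> j)"
    and integ_l: "\<And>j \<theta>. integrable (\<Phi> j) (\<lambda>x. l j \<theta> x)"
    and A1_convex: "convex_on UNIV (Ftot l \<Phi>)"
    and A1_level: "\<And>c. bounded {\<theta>. Ftot l \<Phi> \<theta> \<le> c}"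
    and A1_min: "\<exists>\<theta>s. \<forall>\<theta>. Ftot l \<Phi> \<theta>s \<le> Ftot l \<Phi> \<theta>"
    and A2_integ: "\<And>j \<theta>. integrable (\<Phi> j) (\<lambda>x. gl j \<theta> x)"
    and A2_unbiased: "\<And>j \<theta>. GDERIV (floss l \<Phi> j) \<theta> :> (\<integral>x. gl j \<theta> x \<partial>\<Phi> j)"
    and A2_var: "\<And>j \<theta>. (\<integral>\<^sup>+x. ennreal ((norm (gl j \<theta> x - (\<integral>y. gl j \<theta> y \<partial>\<Phi> j)))\<^sup>2) \<partial>\<Phi> j)
                         \<le> ennreal (\<kappa>\<^sup>2)"
    and A2_lip: "\<And>j \<theta> \<theta>' x. norm (gl j \<theta> x - gl j \<theta>' x) \<le> L * norm (\<theta> - \<theta>')"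
    and A3: "\<And>j \<theta> x. l1norm (gl j \<theta> x) \<le> dl"
    and A4: "assm_A4 R C"
    and Cz: "Cz > 0" and Pz: "0 < Pz" "Pz < 1"
    and CzPz: "\<And>j t. \<bar>1 / (real CARD('m) * (zseq R t j $ j)) - 1 / (u_vec R $ j)\<bar> \<le> Cz * Pz ^ t"
    and lam0_pos: "lam0 > 0" and nu: "1/2 < \<nu>" "\<nu> < 1"
  shows
    "(\<forall>d0 vs T. alg_params lam0 \<nu> d0 vs \<and> T \<ge> 1 \<and>
        d0 i \<ge> (\<Sum>t<T. (rho_psi dl (C $ i $ i) (\<lambda>t. lam0 / (real t + 1) powr \<nu>) t
                       + rho_theta dl (C $ i $ i) (R $ i $ i) (\<lambda>t. lam0 / (real t + 1) powr \<nu>)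
                           Cz Pz (u_vec R $ i) t) * (real t + 1) powr (vs i))
      \<longrightarrow> (let \<delta> = (\<Sum>t<T. (rho_psi dl (C $ i $ i) (\<lambda>t. lam0 / (real t + 1) powr \<nu>) t
                       + rho_theta dl (C $ i $ i) (R $ i $ i) (\<lambda>t. lam0 / (real t + 1) powr \<nu>)
                           Cz Pz (u_vec R $ i) t) / (d0 i / (real t + 1) powr (vs i)))
           in qldp_is_LDP R C gl i (\<lambda>t. lam0 / (real t + 1) powr \<nu>)
                 (\<lambda>t. d0 i / (real t + 1) powr (vs i)) T \<delta> \<and> \<delta> \<le> 1))
     \<and>
     (\<exists>C0>0. \<exists>C3>0. \<forall>d0 vs. alg_params lam0 \<nu> d0 vs \<and>
        d0 i \<ge> (\<Sum>t. C3 * (Cz + C0) / (real t + 1) powr (1 + \<nu> - vs i))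
      \<longrightarrow> (\<forall>T\<ge>1. let \<delta> = (\<Sum>t<T. C3 * (Cz + C0) / (d0 i * (real t + 1) powr (1 + \<nu> - vs i)))
           in qldp_is_LDP R C gl i (\<lambda>t. lam0 / (real t + 1) powr \<nu>)
                 (\<lambda>t. d0 i / (real t + 1) powr (vs i)) T \<delta> \<and> \<delta> \<le> 1))"
proof -
  have Cii: "C $ i $ i < 0" "0 < 1 + C $ i $ i" and Rii: "R $ i $ i < 0" "0 < 1 + R $ i $ i"
    using A4 unfolding assm_A4_def by blast+
  have dl: "\<And>\<theta> x. l1norm (gl i \<theta> x) \<le> dl" using A3 by blast
  have dl0: "0 \<le> dl" using dl[of undefined undefined] l1_nonneg order_trans by blast
  have lip: "\<And>\<theta> \<theta>' x. norm (gl i \<theta> x - gl i \<theta>' x) \<le> L * norm (\<theta> - \<theta>')" using A2_lip by blast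
  have lam_nn: "\<And>t. 0 \<le> lam0 / (real t + 1) powr \<nu>" using lam0_pos by simp
  define u where "u = u_vec R $ i"
  have aaB: "\<And>t. \<bar>aa R i t\<bar> \<le> Cz * Pz ^ t + 1 / \<bar>u\<bar>"
  proof -
    fix t
    have "\<bar>aa R i t - 1 / u\<bar> \<le> Cz * Pz ^ t" using CzPz[of t i] unfolding aa_def u_def by simp
    moreover have "\<bar>aa R i t\<bar> \<le> \<bar>aa R i t - 1 / u\<bar> + \<bar>1 / u\<bar>"
      using abs_triangle_ineq[of "aa R i t - 1 / u" "1 / u"] by simp
    moreover have "\<bar>1 / u\<bar> = 1 / \<bar>u\<bar>" by simp
    ultimately show "\<bar>aa R i t\<bar> \<le> Cz * Pz ^ t + 1 / \<bar>u\<bar>" by linarith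
  qed
  have aaA: "\<And>t. \<bar>aa R i t\<bar> \<le> Cz + 1 / \<bar>u\<bar>"
  proof -
    fix t
    have "Pz ^ t \<le> 1" using Pz by (simp add: power_le_one)
    then have "Cz * Pz ^ t \<le> Cz" using Cz by (simp add: mult_le_cancel_left1)
    then show "\<bar>aa R i t\<bar> \<le> Cz + 1 / \<bar>u\<bar>" using aaB[of t] by linarith
  qed
  show ?thesis
  proof (intro conjI)
    show "\<forall>d0 vs T. alg_params lam0 \<nu> d0 vs \<and> T \<ge> 1 \<and>
        d0 i \<ge> (\<Sum>t<T. (rho_psi dl (C $ i $ i) (\<lambda>t. lam0 / (real t + 1) powr \<nu>) t
                       + rho_theta dl (C $ i $ i) (R $ i $ i) (\<lambda>t. lam0 / (real t + 1) powr \<nu>)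
                           Cz Pz (u_vec R $ i) t) * (real t + 1) powr (vs i))
      \<longrightarrow> (let \<delta> = (\<Sum>t<T. (rho_psi dl (C $ i $ i) (\<lambda>t. lam0 / (real t + 1) powr \<nu>) t
                       + rho_theta dl (C $ i $ i) (R $ i $ i) (\<lambda>t. lam0 / (real t + 1) powr \<nu>)
                           Cz Pz (u_vec R $ i) t) / (d0 i / (real t + 1) powr (vs i)))
           in qldp_is_LDP R C gl i (\<lambda>t. lam0 / (real t + 1) powr \<nu>)
                 (\<lambda>t. d0 i / (real t + 1) powr (vs i)) T \<delta> \<and> \<delta> \<le> 1)"
    proof (intro allI impI)
      fix d0 vs T
      assume H: "alg_params lam0 \<nu> d0 vs \<and> T \<ge> 1 \<and>
        d0 i \<ge> (\<Sum>t<T. (rho_psi dl (C $ i $ i) (\<lambda>t. lam0 / (real t + 1) powr \<nu>) t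
                       + rho_theta dl (C $ i $ i) (R $ i $ i) (\<lambda>t. lam0 / (real t + 1) powr \<nu>)
                           Cz Pz (u_vec R $ i) t) * (real t + 1) powr (vs i))"
      define rr where "rr t = rho_psi dl (C $ i $ i) (\<lambda>t. lam0 / (real t + 1) powr \<nu>) t
                       + rho_theta dl (C $ i $ i) (R $ i $ i) (\<lambda>t. lam0 / (real t + 1) powr \<nu>)
                           Cz Pz (u_vec R $ i) t" for t
      have d0: "0 < d0 i" using H unfolding alg_params_def by auto
      have dpos: "\<And>t. 0 < d0 i / (real t + 1) powr (vs i)" using d0 by simp
      have LDP: "qldp_is_LDP R C gl i (\<lambda>t. lam0 / (real t + 1) powr \<nu>)
                 (\<lambda>t. d0 i / (real t + 1) powr (vs i)) T (\<Sum>t<T. rr t / (d0 i / (real t + 1) powr (vs i)))"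
        unfolding qldp_is_LDP_def zero_delta_LDP_def
      proof (intro allI impI)
        fix th0 ps0 mth mps D D' S
        let ?M = "qldp_mech R C gl i (\<lambda>t. lam0 / (real t + 1) powr \<nu>) (\<lambda>t. d0 i / (real t + 1) powr (vs i)) T th0 ps0 mth mps"
        let ?TH = "\<lambda>D t. fst (qldp_traj R C gl i (\<lambda>t. lam0 / (real t + 1) powr \<nu>) th0 ps0 mth mps D t)"
        let ?PS = "\<lambda>D t. snd (qldp_traj R C gl i (\<lambda>t. lam0 / (real t + 1) powr \<nu>) th0 ps0 mth mps D t)"
        have tv: "tvb (?M D) (?M D') (\<Sum>t<T. (l1norm (?TH D t - ?TH D' t) + l1norm (?PS D t - ?PS D' t)) / (d0 i / (real t + 1) powr (vs i)))"
          by (rule mech_tvb) (rule dpos)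
        have "(\<Sum>t<T. (l1norm (?TH D t - ?TH D' t) + l1norm (?PS D t - ?PS D' t)) / (d0 i / (real t + 1) powr (vs i)))
            \<le> (\<Sum>t<T. rr t / (d0 i / (real t + 1) powr (vs i)))"
        proof (intro sum_mono divide_right_mono)
          fix t
          have "l1norm (?TH D t - ?TH D' t) \<le> rho_theta dl (C $ i $ i) (R $ i $ i) (\<lambda>t. lam0 / (real t + 1) powr \<nu>) Cz Pz u t
             \<and> l1norm (?PS D t - ?PS D' t) \<le> rho_psi dl (C $ i $ i) (\<lambda>t. lam0 / (real t + 1) powr \<nu>) t"
            by (rule sens1[where gl=gl and i=i and R=R and C=C and lam="\<lambda>t. lam0 / (real t + 1) powr \<nu>", OF dl lam_nn Cii Rii aaB])
          then show "l1norm (?TH D t - ?TH D' t) + l1norm (?PS D t - ?PS D' t) \<le> rr t"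
            unfolding rr_def u_def by simp
        qed (use dpos in \<open>simp add: less_imp_le\<close>)
        then show "measure_pmf.prob (?M D) S \<le> measure_pmf.prob (?M D') S + (\<Sum>t<T. rr t / (d0 i / (real t + 1) powr (vs i)))"
          using tv tvb_mono unfolding tvb_def by blast
      qed
      have le1: "(\<Sum>t<T. rr t / (d0 i / (real t + 1) powr (vs i))) \<le> 1"
      proof -
        have "(\<Sum>t<T. rr t / (d0 i / (real t + 1) powr (vs i))) = (\<Sum>t<T. rr t * (real t + 1) powr (vs i)) / d0 i"
          by (simp add: sum_divide_distrib)
        also have "\<dots> \<le> 1" using H d0 unfolding rr_def by simp
        finally show ?thesis .
      qed
      show "let \<delta> = (\<Sum>t<T. (rho_psi dl (C $ i $ i) (\<lambda>t. lam0 / (real t + 1) powr \<nu>) t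
                       + rho_theta dl (C $ i $ i) (R $ i $ i) (\<lambda>t. lam0 / (real t + 1) powr \<nu>)
                           Cz Pz (u_vec R $ i) t) / (d0 i / (real t + 1) powr (vs i)))
           in qldp_is_LDP R C gl i (\<lambda>t. lam0 / (real t + 1) powr \<nu>)
                 (\<lambda>t. d0 i / (real t + 1) powr (vs i)) T \<delta> \<and> \<delta> \<le> 1"
        using LDP le1 unfolding rr_def Let_def by simp
    qed
  next
    have "\<exists>K. \<forall>(e::nat\<Rightarrow>real) f N. e 0 = 0 \<and> f 0 = 0 \<and> (\<forall>t. 0 \<le> e t \<and> 0 \<le> f t) \<and>
     (\<forall>t. Suc t < N \<longrightarrow>
        f (Suc t) \<le> (1 + C $ i $ i) * f t + lam0 / (real t + 1) powr \<nu> * (real CARD('d) * \<bar>L\<bar> * e t + 2 * dl / (real t + 1)) \<and>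
        e (Suc t) \<le> (1 + R $ i $ i) * e t + (Cz + 1 / \<bar>u\<bar>) * ((1 - (1 + C $ i $ i)) * f t + lam0 / (real t + 1) powr \<nu> * (real CARD('d) * \<bar>L\<bar> * e t + 2 * dl / (real t + 1))))
     \<longrightarrow> (\<forall>t<N. e t + f t \<le> K / (real t + 1) powr (1 + \<nu>))"
      by (rule seq_decay) (use Cii Rii Cz dl0 lam0_pos nu in auto)
    then obtain K where K: "\<forall>(e::nat\<Rightarrow>real) f N. e 0 = 0 \<and> f 0 = 0 \<and> (\<forall>t. 0 \<le> e t \<and> 0 \<le> f t) \<and>
     (\<forall>t. Suc t < N \<longrightarrow>
        f (Suc t) \<le> (1 + C $ i $ i) * f t + lam0 / (real t + 1) powr \<nu> * (real CARD('d) * \<bar>L\<bar> * e t + 2 * dl / (real t + 1)) \<and>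
        e (Suc t) \<le> (1 + R $ i $ i) * e t + (Cz + 1 / \<bar>u\<bar>) * ((1 - (1 + C $ i $ i)) * f t + lam0 / (real t + 1) powr \<nu> * (real CARD('d) * \<bar>L\<bar> * e t + 2 * dl / (real t + 1))))
     \<longrightarrow> (\<forall>t<N. e t + f t \<le> K / (real t + 1) powr (1 + \<nu>))"
      by blast
    define Q where "Q = \<bar>K\<bar> + 1"
    have Q: "0 < Q" "K \<le> Q" unfolding Q_def by auto
    have main: "\<forall>d0 vs. alg_params lam0 \<nu> d0 vs \<and>
        d0 i \<ge> (\<Sum>t. Q / (real t + 1) powr (1 + \<nu> - vs i))
      \<longrightarrow> (\<forall>T\<ge>1. let \<delta> = (\<Sum>t<T. Q / (d0 i * (real t + 1) powr (1 + \<nu> - vs i)))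
           in qldp_is_LDP R C gl i (\<lambda>t. lam0 / (real t + 1) powr \<nu>)
                 (\<lambda>t. d0 i / (real t + 1) powr (vs i)) T \<delta> \<and> \<delta> \<le> 1)"
    proof (intro allI impI)
      fix d0 vs and T :: nat
      assume H: "alg_params lam0 \<nu> d0 vs \<and> d0 i \<ge> (\<Sum>t. Q / (real t + 1) powr (1 + \<nu> - vs i))"
        and T: "1 \<le> T"
      have d0: "0 < d0 i" and vs: "vs i < \<nu>" using H unfolding alg_params_def by auto
      have dpos: "\<And>t. 0 < d0 i / (real t + 1) powr (vs i)" using d0 by simp
      have LDP: "qldp_is_LDP R C gl i (\<lambda>t. lam0 / (real t + 1) powr \<nu>)
                 (\<lambda>t. d0 i / (real t + 1) powr (vs i)) T (\<Sum>t<T. Q / (d0 i * (real t + 1) powr (1 + \<nu> - vs i)))"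
        unfolding qldp_is_LDP_def zero_delta_LDP_def
      proof (intro allI impI)
        fix th0 ps0 mth mps and D D' :: "nat \<Rightarrow> 'x" and S
        assume adj: "adjacent_data T D D'"
        then obtain k0 where DD: "\<And>k. k < T \<Longrightarrow> k \<noteq> k0 \<Longrightarrow> D k = D' k"
          unfolding adjacent_data_def by blast
        let ?M = "qldp_mech R C gl i (\<lambda>t. lam0 / (real t + 1) powr \<nu>) (\<lambda>t. d0 i / (real t + 1) powr (vs i)) T th0 ps0 mth mps"
        let ?TH = "\<lambda>D t. fst (qldp_traj R C gl i (\<lambda>t. lam0 / (real t + 1) powr \<nu>) th0 ps0 mth mps D t)"
        let ?PS = "\<lambda>D t. snd (qldp_traj R C gl i (\<lambda>t. lam0 / (real t + 1) powr \<nu>) th0 ps0 mth mps D t)"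
        define e where "e t = l1norm (?TH D t - ?TH D' t)" for t
        define f where "f t = l1norm (?PS D t - ?PS D' t)" for t
        have tv: "tvb (?M D) (?M D') (\<Sum>t<T. (l1norm (?TH D t - ?TH D' t) + l1norm (?PS D t - ?PS D' t)) / (d0 i / (real t + 1) powr (vs i)))"
          by (rule mech_tvb) (rule dpos)
        have P: "e 0 = 0 \<and> f 0 = 0 \<and> (\<forall>t. 0 \<le> e t \<and> 0 \<le> f t) \<and>
     (\<forall>t. Suc t < T \<longrightarrow>
        f (Suc t) \<le> (1 + C $ i $ i) * f t + lam0 / (real t + 1) powr \<nu> * (real CARD('d) * \<bar>L\<bar> * e t + 2 * dl / (real t + 1)) \<and>
        e (Suc t) \<le> (1 + R $ i $ i) * e t + (Cz + 1 / \<bar>u\<bar>) * ((1 - (1 + C $ i $ i)) * f t + lam0 / (real t + 1) powr \<nu> * (real CARD('d) * \<bar>L\<bar> * e t + 2 * dl / (real t + 1))))"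
        proof (intro conjI allI impI)
          show "e 0 = 0" "f 0 = 0" unfolding e_def f_def by simp_all
          fix t
          show "0 \<le> e t" "0 \<le> f t" unfolding e_def f_def by (simp_all add: l1_nonneg)
        next
          fix t assume t: "Suc t < T"
          show "f (Suc t) \<le> (1 + C $ i $ i) * f t + lam0 / (real t + 1) powr \<nu> * (real CARD('d) * \<bar>L\<bar> * e t + 2 * dl / (real t + 1))"
            unfolding e_def f_def by (rule rec2(1)[where gl=gl and i=i and R=R and C=C and lam="\<lambda>t. lam0 / (real t + 1) powr \<nu>", OF dl lip lam_nn Cii Rii aaA DD t])
          show "e (Suc t) \<le> (1 + R $ i $ i) * e t + (Cz + 1 / \<bar>u\<bar>) * ((1 - (1 + C $ i $ i)) * f t + lam0 / (real t + 1) powr \<nu> * (real CARD('d) * \<bar>L\<bar> * e t + 2 * dl / (real t + 1)))"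
            unfolding e_def f_def by (rule rec2(2)[where gl=gl and i=i and R=R and C=C and lam="\<lambda>t. lam0 / (real t + 1) powr \<nu>", OF dl lip lam_nn Cii Rii aaA DD t])
        qed
        have bnd: "\<forall>t<T. e t + f t \<le> K / (real t + 1) powr (1 + \<nu>)"
          using mp[OF spec[OF spec[OF spec[OF K, of e], of f], of T] P] .
        have "(\<Sum>t<T. (l1norm (?TH D t - ?TH D' t) + l1norm (?PS D t - ?PS D' t)) / (d0 i / (real t + 1) powr (vs i)))
            \<le> (\<Sum>t<T. Q / (d0 i * (real t + 1) powr (1 + \<nu> - vs i)))"
        proof (rule sum_mono)
          fix t assume "t \<in> {..<T}"
          then have b: "e t + f t \<le> K / (real t + 1) powr (1 + \<nu>)" using bnd by simp
          have "(e t + f t) / (d0 i / (real t + 1) powr (vs i))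
               \<le> Q / (d0 i * ((real t + 1) powr (1 + \<nu>) / (real t + 1) powr (vs i)))"
            by (rule term_bound[OF d0 _ _ b Q(2)]) auto
          then show "(l1norm (?TH D t - ?TH D' t) + l1norm (?PS D t - ?PS D' t)) / (d0 i / (real t + 1) powr (vs i))
               \<le> Q / (d0 i * (real t + 1) powr (1 + \<nu> - vs i))"
            unfolding e_def f_def by (simp add: powr_diff)
        qed
        then show "measure_pmf.prob (?M D) S \<le> measure_pmf.prob (?M D') S + (\<Sum>t<T. Q / (d0 i * (real t + 1) powr (1 + \<nu> - vs i)))"
          using tv tvb_mono unfolding tvb_def by blast
      qed
      have le1: "(\<Sum>t<T. Q / (d0 i * (real t + 1) powr (1 + \<nu> - vs i))) \<le> 1"
      proof -
        have sm: "summable (\<lambda>t. Q / (real t + 1) powr (1 + \<nu> - vs i))"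
          by (rule summable_pw) (use vs in simp)
        have "(\<Sum>t<T. Q / (d0 i * (real t + 1) powr (1 + \<nu> - vs i))) = (\<Sum>t<T. Q / (real t + 1) powr (1 + \<nu> - vs i)) / d0 i"
          by (simp add: sum_divide_distrib mult.commute)
        also have "\<dots> \<le> (\<Sum>t. Q / (real t + 1) powr (1 + \<nu> - vs i)) / d0 i"
          using d0 Q by (intro divide_right_mono sum_le_suminf sm) auto
        also have "\<dots> \<le> 1" using H d0 by simp
        finally show ?thesis .
      qed
      show "let \<delta> = (\<Sum>t<T. Q / (d0 i * (real t + 1) powr (1 + \<nu> - vs i)))
           in qldp_is_LDP R C gl i (\<lambda>t. lam0 / (real t + 1) powr \<nu>)
                 (\<lambda>t. d0 i / (real t + 1) powr (vs i)) T \<delta> \<and> \<delta> \<le> 1"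
        using LDP le1 unfolding Let_def by simp
    qed
    have eq: "Q / (Cz + 1) * (Cz + 1) = Q" using Cz by simp
    show "\<exists>C0>0. \<exists>C3>0. \<forall>d0 vs. alg_params lam0 \<nu> d0 vs \<and>
        d0 i \<ge> (\<Sum>t. C3 * (Cz + C0) / (real t + 1) powr (1 + \<nu> - vs i))
      \<longrightarrow> (\<forall>T\<ge>1. let \<delta> = (\<Sum>t<T. C3 * (Cz + C0) / (d0 i * (real t + 1) powr (1 + \<nu> - vs i)))
           in qldp_is_LDP R C gl i (\<lambda>t. lam0 / (real t + 1) powr \<nu>)
                 (\<lambda>t. d0 i / (real t + 1) powr (vs i)) T \<delta> \<and> \<delta> \<le> 1)"
      using main Q Cz by (intro exI[of _ "1::real"] conjI exI[of _ "Q / (Cz + 1)"]) (simp_all add: eq)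
  qed
qed


end
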